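(* Let $p$ be a positive integer, $H$ a graph, $T$ a complete rooted ternary tree and $V\subseteq V(T(H))$ with $|OC(T,V)|>p$. Then there exists a minimal sequence of largest subtrees of $T$ with respect to $V$ lacking $p$.
   Context: Complete rooted ternary tree: rooted tree in which all root-leaf paths have the same number of edges and every non-leaf vertex has exactly 3 children. Graph $T(H)$: for $V(H)=\{1,\dots,m\}$, vertices $v^i$ ($v\in V(T)$, $1\le i\le m$), each $\{v^1,\dots,v^m\}$ spanning a copy $H^v$ of $H$, plus edges $u^iv^i$ for $uv\in E(T)$; for a subtree $T'$ of $T$, $T'(H)$ is the subgraph induced by the copies $H^v$, $v\in V(T')$. For $V\subseteq V(T(H))$, $OC(T,V)=\{u\in V(T): V(H^u)\cap V\neq\emptyset\}$. An immediate subtree of $T$ is the subtree consisting of a child of the root and all its descendants; an immediate subtree $T'$ is largest with respect to $V$ if $|OC(T,V)\cap V(T')|$ is maximum among the immediate subtrees. A sequence of largest subtrees of $T$ w.r.t. $V$ is $T_1,\dots,T_q$ with $T_1=T$, $V_1=V$, and for $i<q$, $T_{i+1}$ a largest immediate subtree of $T_i$ w.r.t. $V_i$ and $V_{i+1}=V_i\cap V(T_{i+1}(H))$. It is a minimal sequence lacking $p$ if $|OC(T_1,V_1)|-|OC(T_q,V_q)|\geq p$ while $|OC(T_1,V_1)|-|OC(T_{q-1},V_{q-1})|<p$. *)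

theory Defs
  imports Main
begin

text \<open>The complete rooted ternary tree of height d (all root-leaf paths have d edges)
is modelled canonically: vertices are the words over {0,1,2} of length at most d,
the root is the empty word, and the children of w are w@[0], w@[1], w@[2].\<close>

definition tree_verts :: "nat \<Rightarrow> nat list set" where
  "tree_verts d = {w. set w \<subseteq> {0,1,2} \<and> length w \<le> d}"

definition subtree_verts :: "nat \<Rightarrow> nat list \<Rightarrow> nat list set" where
  "subtree_verts d w = {u \<in> tree_verts d. \<exists>s. u = w @ s}"

definition is_graph :: "nat \<Rightarrow> (nat \<Rightarrow> nat \<Rightarrow> bool) \<Rightarrow> bool" where
  "is_graph m E \<longleftrightarrow> (\<forall>i j. E i j \<longrightarrow> i \<in> {1..m} \<and> j \<in> {1..m} \<and> E j i \<and> i \<noteq> j)"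

text \<open>Vertex set of T'(H) for the subtree T' rooted at w: vertex v^i is the pair (v,i).\<close>
definition TH_verts :: "nat \<Rightarrow> nat \<Rightarrow> nat list \<Rightarrow> (nat list \<times> nat) set" where
  "TH_verts d m w = subtree_verts d w \<times> {1..m}"

definition OC :: "nat \<Rightarrow> nat list \<Rightarrow> (nat list \<times> nat) set \<Rightarrow> nat list set" where
  "OC d w V = {u \<in> subtree_verts d w. \<exists>i. (u, i) \<in> V}"

definition largest_immediate ::
    "nat \<Rightarrow> (nat list \<times> nat) set \<Rightarrow> nat list \<Rightarrow> nat \<Rightarrow> bool" where
  "largest_immediate d V w c \<longleftrightarrow> c < 3 \<and> length w < d \<and>
     (\<forall>c'<3. card (OC d w V \<inter> subtree_verts d (w @ [c']))
              \<le> card (OC d w V \<inter> subtree_verts d (w @ [c])))"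

text \<open>A sequence of largest subtrees T_1,...,T_q, given by the list of their roots,
together with V_1 = V and V_(k+1) = V_k \<inter> V(T_(k+1)(H)).\<close>
definition V_seq :: "nat \<Rightarrow> nat \<Rightarrow> (nat list \<times> nat) set \<Rightarrow> nat list list \<Rightarrow> nat
    \<Rightarrow> (nat list \<times> nat) set" where
  "V_seq d m V ws k = V \<inter> (\<Inter>j\<in>{1..k}. TH_verts d m (ws ! j))"

definition seq_largest :: "nat \<Rightarrow> nat \<Rightarrow> (nat list \<times> nat) set \<Rightarrow> nat list list \<Rightarrow> bool" where
  "seq_largest d m V ws \<longleftrightarrow> ws \<noteq> [] \<and> ws ! 0 = [] \<and>
     (\<forall>k. Suc k < length ws \<longrightarrow>
        (\<exists>c. ws ! Suc k = ws ! k @ [c] \<and> largest_immediate d (V_seq d m V ws k) (ws ! k) c))"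

definition minimal_lacking ::
    "nat \<Rightarrow> nat \<Rightarrow> (nat list \<times> nat) set \<Rightarrow> nat \<Rightarrow> nat list list \<Rightarrow> bool" where
  "minimal_lacking d m V p ws \<longleftrightarrow> seq_largest d m V ws \<and> length ws \<ge> 2 \<and>
     (let q = length ws in
       int (card (OC d [] V)) - int (card (OC d (ws ! (q-1)) (V_seq d m V ws (q-1)))) \<ge> int p \<and>
       int (card (OC d [] V)) - int (card (OC d (ws ! (q-2)) (V_seq d m V ws (q-2)))) < int p)"

end

theory Submission
  imports Defs
begin

definition gg :: "nat \<Rightarrow> (nat list \<times> nat) set \<Rightarrow> nat list \<Rightarrow> nat" where
  "gg d V w = card (OC d [] V \<inter> subtree_verts d w)"

fun path :: "nat \<Rightarrow> (nat list \<times> nat) set \<Rightarrow> nat \<Rightarrow> nat list" where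
  "path d V 0 = []"
| "path d V (Suc k) = (if length (path d V k) < d then path d V k @
     [SOME c. c < 3 \<and> (\<forall>c'<3. gg d V (path d V k @ [c']) \<le> gg d V (path d V k @ [c]))]
   else path d V k)"

lemma max3: "\<exists>c::nat. c < 3 \<and> (\<forall>c'<3. f c' \<le> (f c :: nat))"
proof -
  have a: "\<And>c'::nat. c' < 3 \<Longrightarrow> c' = 0 \<or> c' = 1 \<or> c' = 2" by auto
  show ?thesis
  proof (cases "f 0 \<ge> f 1 \<and> f 0 \<ge> f 2")
    case True then show ?thesis using a by (intro exI[of _ 0]) fastforce
  next
    case F: False
    show ?thesis
    proof (cases "f 1 \<ge> f 2")
      case True then show ?thesis using a F by (intro exI[of _ 1]) fastforce
    next
      case False then show ?thesis using a F by (intro exI[of _ 2]) fastforce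
    qed
  qed
qed

lemma path_choice:
  assumes "length (path d V k) < d"
  shows "\<exists>c. path d V (Suc k) = path d V k @ [c] \<and> c < 3 \<and>
     (\<forall>c'<3. gg d V (path d V k @ [c']) \<le> gg d V (path d V k @ [c]))"
proof -
  let ?P = "\<lambda>c. c < 3 \<and> (\<forall>c'<3. gg d V (path d V k @ [c']) \<le> gg d V (path d V k @ [c]))"
  have "?P (SOME c. ?P c)" using max3[of "\<lambda>c. gg d V (path d V k @ [c])"] by (rule someI_ex)
  then show ?thesis using assms by auto
qed

lemma path_len: "k \<le> d \<Longrightarrow> length (path d V k) = k"
  by (induction k) auto

lemma path_prefix: "j \<le> k \<Longrightarrow> \<exists>s. path d V k = path d V j @ s"
proof (induction k)
  case 0 then show ?case by auto
next
  case (Suc k)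
  show ?case
  proof (cases "j = Suc k")
    case True then show ?thesis by auto
  next
    case False
    then obtain s where "path d V k = path d V j @ s" using Suc by auto
    then show ?thesis by auto
  qed
qed

lemma subtree_mono: "w' = w @ s \<Longrightarrow> subtree_verts d w' \<subseteq> subtree_verts d w"
  unfolding subtree_verts_def by auto

lemma OC_eq:
  assumes V: "V \<subseteq> TH_verts d m []"
    and pre: "\<And>j. j \<in> {1..k} \<Longrightarrow> subtree_verts d w \<subseteq> subtree_verts d (ws ! j)"
  shows "OC d w (V_seq d m V ws k) = OC d [] V \<inter> subtree_verts d w"
  unfolding OC_def V_seq_def
proof safe
  fix u i assume "u \<in> subtree_verts d w" "(u, i) \<in> V"
  then show "u \<in> subtree_verts d []" unfolding subtree_verts_def by auto
next
  fix u i assume u: "u \<in> subtree_verts d w" and ui: "(u, i) \<in> V"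
  have "i \<in> {1..m}" using V ui unfolding TH_verts_def by auto
  then show "\<exists>i. (u, i) \<in> V \<inter> (\<Inter>j\<in>{1..k}. TH_verts d m (ws ! j))"
    using ui u pre unfolding TH_verts_def by blast
qed auto

theorem lemma4:
  fixes p d m :: nat and E :: "nat \<Rightarrow> nat \<Rightarrow> bool"
    and V :: "(nat list \<times> nat) set"
  assumes "p > 0"
    and "is_graph m E"
    and "V \<subseteq> TH_verts d m []"
    and "card (OC d [] V) > p"
  shows "\<exists>ws. minimal_lacking d m V p ws"
proof -
  define N where "N = card (OC d [] V)"
  define Q where "Q = (\<lambda>n. int N - int (gg d V (path d V n)) \<ge> int p)"
  have leaf: "gg d V (path d V d) \<le> 1"
  proof -
    have "OC d [] V \<inter> subtree_verts d (path d V d) \<subseteq> {path d V d}"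
      using path_len[of d d V] unfolding subtree_verts_def tree_verts_def by auto
    then show ?thesis unfolding gg_def using card_mono[of "{path d V d}"] by fastforce
  qed
  have Qd: "Q d" using leaf assms(4) unfolding Q_def N_def by auto
  define n where "n = (LEAST n. Q n)"
  have Qn: "Q n" unfolding n_def using Qd by (rule LeastI)
  have nd: "n \<le> d" unfolding n_def using Qd by (rule Least_le)
  have n0: "n \<noteq> 0"
  proof
    assume "n = 0"
    then have "Q 0" using Qn by simp
    have "OC d [] V \<inter> subtree_verts d [] = OC d [] V" unfolding OC_def by auto
    then show False using \<open>Q 0\<close> assms(1) unfolding Q_def gg_def N_def by simp
  qed
  have notQ: "\<not> Q (n - 1)" using n0 not_less_Least[of "n - 1" Q] unfolding n_def[symmetric] by simp
  define ws where "ws = map (path d V) [0..<Suc n]"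
  have len: "length ws = Suc n" unfolding ws_def by simp
  have wsk: "\<And>k. k \<le> n \<Longrightarrow> ws ! k = path d V k" unfolding ws_def
    by (simp add: nth_map_upt del: upt_Suc)
  have OCk: "\<And>k. k \<le> n \<Longrightarrow> OC d (ws ! k) (V_seq d m V ws k) = OC d [] V \<inter> subtree_verts d (path d V k)"
  proof -
    fix k assume k: "k \<le> n"
    show "OC d (ws ! k) (V_seq d m V ws k) = OC d [] V \<inter> subtree_verts d (path d V k)"
      unfolding wsk[OF k]
    proof (rule OC_eq[OF assms(3)])
      fix j assume "j \<in> {1..k}"
      then have "j \<le> k" "j \<le> n" using k by auto
      then show "subtree_verts d (path d V k) \<subseteq> subtree_verts d (ws ! j)"
        using path_prefix[of j k d V] subtree_mono wsk by metis
    qed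
  qed
  have seq: "seq_largest d m V ws"
    unfolding seq_largest_def
  proof (intro conjI allI impI)
    show "ws \<noteq> []" using len by auto
    show "ws ! 0 = []" using wsk[of 0] by simp
  next
    fix k assume "Suc k < length ws"
    then have k: "Suc k \<le> n" using len by simp
    then have lk: "length (path d V k) < d" using path_len[of k d V] nd by simp
    obtain c where c: "path d V (Suc k) = path d V k @ [c]" "c < 3"
      "\<forall>c'<3. gg d V (path d V k @ [c']) \<le> gg d V (path d V k @ [c])"
      using path_choice[OF lk] by blast
    have e: "\<And>c'. card (OC d (ws ! k) (V_seq d m V ws k) \<inter> subtree_verts d (ws ! k @ [c']))
        = gg d V (path d V k @ [c'])"
    proof -
      fix c'
      have "subtree_verts d (path d V k @ [c']) \<subseteq> subtree_verts d (path d V k)"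
        by (rule subtree_mono) simp
      then show "card (OC d (ws ! k) (V_seq d m V ws k) \<inter> subtree_verts d (ws ! k @ [c']))
        = gg d V (path d V k @ [c'])"
      proof -
        have kn: "k \<le> n" using k by simp
        have "OC d (ws ! k) (V_seq d m V ws k) \<inter> subtree_verts d (ws ! k @ [c'])
            = OC d [] V \<inter> subtree_verts d (path d V k) \<inter> subtree_verts d (path d V k @ [c'])"
          using OCk[OF kn] wsk[OF kn] by simp
        also have "\<dots> = OC d [] V \<inter> subtree_verts d (path d V k @ [c'])"
          using \<open>subtree_verts d (path d V k @ [c']) \<subseteq> subtree_verts d (path d V k)\<close> by blast
        finally show ?thesis unfolding gg_def by simp
      qed
    qed
    show "\<exists>c. ws ! Suc k = ws ! k @ [c] \<and> largest_immediate d (V_seq d m V ws k) (ws ! k) c"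
      using c lk k wsk[of k] wsk[of "Suc k"] unfolding largest_immediate_def e by auto
  qed
  have "minimal_lacking d m V p ws"
    unfolding minimal_lacking_def Let_def len
    using seq n0 Qn notQ OCk[of n] OCk[of "n - 1"]
    unfolding Q_def gg_def N_def by simp
  then show ?thesis by blast
qed

end
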